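(* Let $X\in\mathrm{Herm}(N)$ be an invariant random matrix with diagonal vector $x_{\mathrm{diag}}\in\mathbb R^N$ and unordered eigenvalue vector $x_{\mathrm{eig}}\in\mathbb R^N$, and let $\tilde\alpha\in[0,\infty)$. The following are equivalent: (1) $X$ has a heavy tail with index $\tilde\alpha$; (2) $x_{\mathrm{diag}}$ has a heavy tail with index $\tilde\alpha$; (3) $x_{\mathrm{eig}}$ has a heavy tail with index $\tilde\alpha$.
   Context: Invariant means $UXU^\dagger\overset d=X$ for all $U\in\mathrm U(N)$. A random vector $x\in\mathbb R^d$ is heavy-tailed with index $\tilde\alpha$ if $\tilde\alpha=\sup\{m\ge0:\mathbb E[\sup_{a\in\mathbb S^{d-1}}|a^\top x|^m]<\infty\}<\infty$; a random matrix $X\in\mathrm{Herm}(N)$ is heavy-tailed with index $\tilde\alpha$ if $\tilde\alpha=\sup\{m\ge0:\mathbb E[\sup_{A\in\mathbb S_{\mathrm{Herm}(N)}}|\mathrm{Tr}\,AX|^m]<\infty\}<\infty$, where $\mathbb S_{\mathrm{Herm}(N)}=\{A\in\mathrm{Herm}(N):\mathrm{Tr}\,A^2=1\}$. *)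

theory Defs
  imports "HOL-Analysis.Analysis" "HOL-Probability.Probability"
begin

text \<open>Complex N x N matrices, N = CARD('n), as complex^'n^'n.\<close>

definition ctrans :: "complex^'n^'n \<Rightarrow> complex^'n^'n" where
  "ctrans A = (\<chi> i j. cnj (A $ j $ i))"

definition herm :: "(complex^'n^'n) set" where
  "herm = {A. ctrans A = A}"

definition unitary :: "complex^'n^'n \<Rightarrow> bool" where
  "unitary U \<longleftrightarrow> U ** ctrans U = mat 1"

definition diag_mat :: "real^'n \<Rightarrow> complex^'n^'n" where
  "diag_mat v = (\<chi> i j. if i = j then complex_of_real (v $ i) else 0)"

definition diag_vec :: "complex^'n^'n \<Rightarrow> real^'n" where
  "diag_vec A = (\<chi> i. Re (A $ i $ i))"

definition is_eig_vec :: "complex^'n^'n \<Rightarrow> real^'n \<Rightarrow> bool" where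
  "is_eig_vec A v \<longleftrightarrow> (\<exists>U. unitary U \<and> A = U ** diag_mat v ** ctrans U)"

definition invariant_rm :: "'a measure \<Rightarrow> ('a \<Rightarrow> complex^'n^'n) \<Rightarrow> bool" where
  "invariant_rm M X \<longleftrightarrow>
     (\<forall>U. unitary U \<longrightarrow> distr M borel (\<lambda>\<omega>. U ** X \<omega> ** ctrans U) = distr M borel X)"

definition tail_index :: "'a measure \<Rightarrow> ('a \<Rightarrow> real) \<Rightarrow> real \<Rightarrow> bool" where
  "tail_index M S \<alpha> \<longleftrightarrow>
     (SUP m \<in> {m::real. 0 \<le> m \<and> (\<integral>\<^sup>+ \<omega>. ennreal (S \<omega> powr m) \<partial>M) < \<infinity>}. ereal m) = ereal \<alpha>"

definition vec_sup :: "real^'n \<Rightarrow> real" where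
  "vec_sup x = (SUP a \<in> sphere 0 1. \<bar>a \<bullet> x\<bar>)"

definition mat_sup :: "complex^'n^'n \<Rightarrow> real" where
  "mat_sup X = (SUP A \<in> {A \<in> herm. trace (A ** A) = 1}. cmod (trace (A ** X)))"

definition heavy_tailed_vec :: "'a measure \<Rightarrow> ('a \<Rightarrow> real^'n) \<Rightarrow> real \<Rightarrow> bool" where
  "heavy_tailed_vec M x \<alpha> \<longleftrightarrow> tail_index M (\<lambda>\<omega>. vec_sup (x \<omega>)) \<alpha>"

definition heavy_tailed_mat :: "'a measure \<Rightarrow> ('a \<Rightarrow> complex^'n^'n) \<Rightarrow> real \<Rightarrow> bool" where
  "heavy_tailed_mat M X \<alpha> \<longleftrightarrow> tail_index M (\<lambda>\<omega>. mat_sup (X \<omega>)) \<alpha>"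

end

theory Submission
  imports Defs
begin


lemma herm_entry: "A \<in> herm \<Longrightarrow> A $ k $ i = cnj (A $ i $ k)"
proof -
  assume "A \<in> herm"
  then have "ctrans A = A" by (simp add: herm_def)
  then have "A $ k $ i = ctrans A $ k $ i" by simp
  then show ?thesis by (simp add: ctrans_def)
qed

lemma norm_sq_entries: "(norm (X::complex^'n^'n))\<^sup>2 = (\<Sum>i\<in>UNIV. \<Sum>k\<in>UNIV. (cmod (X$i$k))\<^sup>2)"
  by (simp add: power2_norm_eq_inner inner_vec_def)

lemma trace_herm:
  assumes "A \<in> herm" "X \<in> herm"
  shows "trace (A ** X) = complex_of_real (inner A X)"
proof -
  have t: "trace (A**X) = (\<Sum>i\<in>UNIV. \<Sum>k\<in>UNIV. A$i$k * cnj (X$i$k))"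
  proof -
    have "trace (A**X) = (\<Sum>i\<in>UNIV. \<Sum>k\<in>UNIV. A$i$k * X$k$i)"
      by (simp add: trace_def matrix_matrix_mult_def)
    also have "\<dots> = (\<Sum>i\<in>UNIV. \<Sum>k\<in>UNIV. A$i$k * cnj (X$i$k))"
    proof (intro sum.cong refl)
      fix i k show "A$i$k * X$k$i = A$i$k * cnj (X$i$k)" using herm_entry[OF assms(2), of k i] by simp
    qed
    finally show ?thesis .
  qed
  have re: "Re (trace (A**X)) = inner A X"
    by (simp add: t inner_vec_def inner_complex_def Re_sum)
  have "Im (trace (A**X)) = (\<Sum>i\<in>UNIV. \<Sum>k\<in>UNIV. Im (A$i$k * cnj (X$i$k)))" by (simp add: t Im_sum)
  also have "\<dots> = (\<Sum>k\<in>UNIV. \<Sum>i\<in>UNIV. Im (A$i$k * cnj (X$i$k)))" by (rule sum.swap)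
  also have "\<dots> = (\<Sum>k\<in>UNIV. \<Sum>i\<in>UNIV. - Im (A$k$i * cnj (X$k$i)))"
  proof (intro sum.cong refl)
    fix k i
    have a: "A$i$k = cnj (A$k$i)" by (rule herm_entry[OF assms(1)])
    have x: "X$i$k = cnj (X$k$i)" by (rule herm_entry[OF assms(2)])
    have "A$i$k * cnj (X$i$k) = cnj (A$k$i * cnj (X$k$i))" unfolding a x by simp
    then show "Im (A$i$k * cnj (X$i$k)) = - Im (A$k$i * cnj (X$k$i))" by simp
  qed
  also have "\<dots> = - (\<Sum>k\<in>UNIV. \<Sum>i\<in>UNIV. Im (A$k$i * cnj (X$k$i)))" by (simp only: sum_negf)
  also have "(\<Sum>k\<in>UNIV. \<Sum>i\<in>UNIV. Im (A$k$i * cnj (X$k$i))) = Im (trace (A**X))" by (simp only: t Im_sum)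
  finally have "Im (trace (A**X)) = 0" by simp
  with re show ?thesis by (simp add: complex_eq_iff)
qed

lemma herm_scaleR: "A \<in> herm \<Longrightarrow> c *\<^sub>R A \<in> herm"
  unfolding herm_def ctrans_def by (auto simp: vec_eq_iff)

lemma herm_mat1: "mat 1 \<in> herm"
  unfolding herm_def ctrans_def by (auto simp: vec_eq_iff mat_def)

lemma mat_sup_eq: fixes X :: "complex^'n^'n" assumes X: "X \<in> herm" shows "mat_sup X = norm X"
proof -
  let ?S = "{A \<in> herm. trace (A ** A) = 1}"
  have S: "A \<in> ?S \<longleftrightarrow> A \<in> herm \<and> norm A = 1" for A :: "complex^'n^'n"
  proof -
    have "trace (A ** A) = 1 \<longleftrightarrow> norm A = 1" if h: "A \<in> herm"
    proof -
      have "trace (A ** A) = complex_of_real ((norm A)^2)" by (simp add: trace_herm[OF h h] dot_square_norm)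
      then have "trace (A ** A) = 1 \<longleftrightarrow> (norm A)^2 = 1" by (metis of_real_eq_1_iff)
      also have "\<dots> \<longleftrightarrow> norm A = 1" using norm_ge_zero[of A] by (smt (verit) power2_eq_1_iff)
      finally show ?thesis .
    qed
    then show ?thesis by auto
  qed
  have val: "A \<in> ?S \<Longrightarrow> cmod (trace (A ** X)) = \<bar>inner A X\<bar>" for A
    using trace_herm[OF _ X] by simp
  have le: "cmod (trace (A ** X)) \<le> norm X" if "A \<in> ?S" for A
    using val[OF that] S[of A] that Cauchy_Schwarz_ineq2[of A X] by simp
  obtain A0 where A0: "A0 \<in> ?S" "cmod (trace (A0 ** X)) = norm X"
  proof (cases "X = 0")
    case True
    define A0 where "A0 = (1 / norm (mat 1 :: complex^'n^'n)) *\<^sub>R (mat 1 :: complex^'n^'n)"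
    have "(mat 1 :: complex^'n^'n) \<noteq> 0" by (simp add: vec_eq_iff mat_def)
    then have "A0 \<in> ?S" unfolding S A0_def using herm_scaleR[OF herm_mat1] by simp
    moreover have "cmod (trace (A0 ** X)) = norm X" using True by (simp add: trace_def matrix_matrix_mult_def)
    ultimately show ?thesis using that by blast
  next
    case False
    define A0 where "A0 = (1 / norm X) *\<^sub>R X"
    have "A0 \<in> ?S" unfolding S A0_def using herm_scaleR[OF X] False by simp
    moreover have "cmod (trace (A0 ** X)) = norm X" using val[OF \<open>A0 \<in> ?S\<close>] False
      by (simp add: A0_def dot_square_norm power2_eq_square)
    ultimately show ?thesis using that by blast
  qed
  have bdd: "bdd_above ((\<lambda>A. cmod (trace (A ** X))) ` ?S)" by (rule bdd_aboveI2[where M = "norm X"]) (use le in auto)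
  show ?thesis unfolding mat_sup_def
  proof (rule antisym)
    show "(SUP A \<in> ?S. cmod (trace (A ** X))) \<le> norm X"
      using A0 le by (intro cSUP_least) auto
    show "norm X \<le> (SUP A \<in> ?S. cmod (trace (A ** X)))"
      using A0 bdd by (metis (no_types, lifting) cSUP_upper)
  qed
qed

lemma vec_sup_eq: "vec_sup (x::real^'n) = norm x"
proof -
  have le: "\<bar>a \<bullet> x\<bar> \<le> norm x" if "a \<in> sphere 0 1" for a
    using that Cauchy_Schwarz_ineq2[of a x] by simp
  obtain a0 where a0: "a0 \<in> sphere 0 1" "\<bar>a0 \<bullet> x\<bar> = norm x"
  proof (cases "x = 0")
    case True
    then show ?thesis using that[of "axis undefined 1"] by simp
  next
    case False
    show ?thesis using that[of "(1 / norm x) *\<^sub>R x"] False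
      by (simp add: dot_square_norm power2_eq_square)
  qed
  have bdd: "bdd_above ((\<lambda>a. \<bar>a \<bullet> x\<bar>) ` sphere 0 1)" by (rule bdd_aboveI2[where M = "norm x"]) (use le in auto)
  show ?thesis unfolding vec_sup_def
  proof (rule antisym)
    show "(SUP a \<in> sphere 0 1. \<bar>a \<bullet> x\<bar>) \<le> norm x"
      using a0 le by (intro cSUP_least) auto
    show "norm x \<le> (SUP a \<in> sphere 0 1. \<bar>a \<bullet> x\<bar>)"
      using a0 bdd by (metis (no_types, lifting) cSUP_upper)
  qed
qed

lemma ctrans_mult: "ctrans (A ** B) = ctrans B ** (ctrans A :: complex^'n^'n)"
  by (simp add: ctrans_def matrix_matrix_mult_def vec_eq_iff cnj_sum mult.commute)

lemma ctrans_ctrans[simp]: "ctrans (ctrans A) = (A :: complex^'n^'n)"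
  by (simp add: ctrans_def vec_eq_iff)

lemma unitary_left: "unitary U \<Longrightarrow> ctrans U ** U = mat 1"
  unfolding unitary_def using matrix_left_right_inverse by blast

lemma Re_trace_ctrans: "Re (trace (A ** ctrans B)) = inner A (B :: complex^'n^'n)"
  by (simp add: trace_def matrix_matrix_mult_def ctrans_def Re_sum inner_vec_def inner_complex_def)

lemma trace_conj_unitary:
  assumes "unitary U" shows "trace (U ** M ** ctrans U) = trace (M :: complex^'n^'n)"
proof -
  have "trace (U ** M ** ctrans U) = trace (ctrans U ** (U ** M))" by (rule trace_mul_sym)
  also have "\<dots> = trace ((ctrans U ** U) ** M)" by (simp add: matrix_mul_assoc)
  also have "\<dots> = trace M" by (simp add: unitary_left[OF assms])
  finally show ?thesis .
qed

lemma norm_diag_mat: "norm (diag_mat v :: complex^'n^'n) = norm v"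
proof -
  have "(norm (diag_mat v :: complex^'n^'n))\<^sup>2 = (\<Sum>i\<in>UNIV. \<Sum>k\<in>UNIV. (cmod ((diag_mat v :: complex^'n^'n)$i$k))\<^sup>2)"
    by (rule norm_sq_entries)
  also have "\<dots> = (\<Sum>i\<in>UNIV. (v$i)\<^sup>2)"
  proof (rule sum.cong[OF refl])
    fix i
    have "(cmod ((diag_mat v :: complex^'n^'n)$i$k))\<^sup>2 = (if k = i then (v$i)\<^sup>2 else 0)" for k
      by (simp add: diag_mat_def)
    then show "(\<Sum>k\<in>UNIV. (cmod ((diag_mat v :: complex^'n^'n)$i$k))\<^sup>2) = (v$i)\<^sup>2" by simp
  qed
  also have "\<dots> = v \<bullet> v" unfolding inner_vec_def by (simp add: power2_eq_square)
  also have "\<dots> = (norm v)\<^sup>2" by (rule dot_square_norm)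
  finally show ?thesis by (simp add: power2_eq_iff_nonneg)
qed

lemma norm_eig:
  assumes "is_eig_vec A v" shows "norm (A :: complex^'n^'n) = norm v"
proof -
  obtain U where U: "unitary U" "A = U ** diag_mat v ** ctrans U"
    using assms unfolding is_eig_vec_def by blast
  let ?D = "diag_mat v :: complex^'n^'n"
  have "A ** ctrans A = U ** ?D ** ctrans U ** (U ** ctrans ?D ** ctrans U)"
    by (simp add: U ctrans_mult matrix_mul_assoc)
  also have "\<dots> = U ** ?D ** (ctrans U ** U) ** ctrans ?D ** ctrans U"
    by (simp add: matrix_mul_assoc)
  also have "\<dots> = U ** (?D ** ctrans ?D) ** ctrans U"
    by (simp add: unitary_left[OF U(1)] matrix_mul_assoc)
  finally have "trace (A ** ctrans A) = trace (?D ** ctrans ?D)"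
    by (simp add: trace_conj_unitary[OF U(1)])
  then have "inner A A = inner ?D ?D" by (metis Re_trace_ctrans)
  then show ?thesis by (metis norm_eq_sqrt_inner norm_diag_mat)
qed

definition hs :: complex where "hs = complex_of_real (inverse (sqrt 2))"

lemma cnj_hs[simp]: "cnj hs = hs" by (simp add: hs_def)
lemma hs_sq: "hs * hs = 1/2"
proof -
  have "inverse (sqrt 2) * inverse (sqrt 2) = (1/2::real)"
    by (simp flip: inverse_mult_distrib)
  have "hs * hs = complex_of_real (inverse (sqrt 2) * inverse (sqrt 2))" by (simp only: hs_def of_real_mult)
  then show ?thesis using \<open>inverse (sqrt 2) * inverse (sqrt 2) = (1/2::real)\<close> by simp
qed

definition mixU :: "'n \<Rightarrow> 'n \<Rightarrow> complex \<Rightarrow> complex^'n^'n" where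
  "mixU j k c = (\<chi> a b. if a = j then (if b = j then hs else if b = k then hs * c else 0)
     else if a = k then (if b = j then - hs * cnj c else if b = k then hs else 0)
     else (if b = a then 1 else 0))"

lemma sum2: fixes f :: "'n::finite \<Rightarrow> 'b::comm_monoid_add" shows "j \<noteq> k \<Longrightarrow> (\<And>t. t \<noteq> j \<Longrightarrow> t \<noteq> k \<Longrightarrow> f t = 0) \<Longrightarrow> (\<Sum>t\<in>UNIV. f t) = f j + f k"
  by (subst sum.mono_neutral_right[of UNIV "{j,k}"]) auto

lemma sum1: fixes f :: "'n::finite \<Rightarrow> 'b::comm_monoid_add" shows "(\<And>t. t \<noteq> a \<Longrightarrow> f t = 0) \<Longrightarrow> (\<Sum>t\<in>UNIV. f t) = f a"
  by (subst sum.mono_neutral_right[of UNIV "{a}"]) auto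

lemma mixU_unitary:
  assumes jk: "j \<noteq> k" and c: "cnj c * c = 1"
  shows "unitary (mixU j k c)"
proof -
  let ?W = "mixU j k c"
  have "(?W ** ctrans ?W)$a$b = mat 1 $a$b" for a b
  proof -
    have e: "(?W ** ctrans ?W)$a$b = (\<Sum>t\<in>UNIV. ?W$a$t * cnj (?W$b$t))"
      by (simp add: matrix_matrix_mult_def ctrans_def)
    consider "a = j" | "a = k" | "a \<noteq> j" "a \<noteq> k" by blast
    then show ?thesis
    proof cases
      case 1
      then have "(?W ** ctrans ?W)$a$b = ?W$a$j * cnj (?W$b$j) + ?W$a$k * cnj (?W$b$k)"
        unfolding e by (intro sum2[OF jk]) (auto simp: mixU_def)
      moreover have "?W$a$j * cnj (?W$b$j) + ?W$a$k * cnj (?W$b$k) = mat 1 $a$b"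
      proof -
        consider "b = j" | "b = k" | "b \<noteq> j" "b \<noteq> k" by blast
        then show ?thesis
        proof cases
          case 1
          then show ?thesis using \<open>a = j\<close> jk apply (simp add: mixU_def mat_def)
            using hs_sq c by (simp add: algebra_simps)
        next
          case 2
          then show ?thesis using \<open>a = j\<close> jk by (simp add: mixU_def mat_def)
        next
          case 3
          then show ?thesis using \<open>a = j\<close> jk by (simp add: mixU_def mat_def)
        qed
      qed
      ultimately show ?thesis by simp
    next
      case 2
      then have "(?W ** ctrans ?W)$a$b = ?W$a$j * cnj (?W$b$j) + ?W$a$k * cnj (?W$b$k)"
        unfolding e by (intro sum2[OF jk]) (auto simp: mixU_def)
      moreover have "?W$a$j * cnj (?W$b$j) + ?W$a$k * cnj (?W$b$k) = mat 1 $a$b"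
      proof -
        consider "b = j" | "b = k" | "b \<noteq> j" "b \<noteq> k" by blast
        then show ?thesis
        proof cases
          case 1
          then show ?thesis using \<open>a = k\<close> jk by (simp add: mixU_def mat_def)
        next
          case 2
          then show ?thesis using \<open>a = k\<close> jk apply (simp add: mixU_def mat_def)
            using hs_sq c by (simp add: algebra_simps)
        next
          case 3
          then show ?thesis using \<open>a = k\<close> jk by (simp add: mixU_def mat_def)
        qed
      qed
      ultimately show ?thesis by simp
    next
      case 3
      then have "(?W ** ctrans ?W)$a$b = ?W$a$a * cnj (?W$b$a)"
        unfolding e by (intro sum1) (auto simp: mixU_def)
      then show ?thesis using 3 by (auto simp: mixU_def mat_def)
    qed
  qed
  then show ?thesis unfolding unitary_def by (simp add: vec_eq_iff)
qed

lemma mix_diag: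
  assumes jk: "j \<noteq> k" and c: "cnj c * c = 1" and X: "X \<in> herm"
  shows "Re ((mixU j k c ** X ** ctrans (mixU j k c))$j$j) = Re (X$j$j)/2 + Re (X$k$k)/2 + Re (X$j$k * cnj c)"
proof -
  let ?W = "mixU j k c"
  have e1: "(?W ** X ** ctrans ?W)$j$j = (\<Sum>b\<in>UNIV. (\<Sum>a\<in>UNIV. ?W$j$a * X$a$b) * cnj (?W$j$b))"
    by (simp add: matrix_matrix_mult_def ctrans_def)
  have e2: "(\<Sum>a\<in>UNIV. ?W$j$a * X$a$b) = hs * X$j$b + hs * c * X$k$b" for b
    by (subst sum2[OF jk]) (use jk in \<open>auto simp: mixU_def dest: sym\<close>)
  have "(?W ** X ** ctrans ?W)$j$j = (\<Sum>b\<in>UNIV. (hs * X$j$b + hs * c * X$k$b) * cnj (?W$j$b))"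
    unfolding e1 e2 ..
  also have "\<dots> = (hs * X$j$j + hs * c * X$k$j) * cnj hs + (hs * X$j$k + hs * c * X$k$k) * cnj (hs * c)"
    by (subst sum2[OF jk]) (use jk in \<open>auto simp: mixU_def dest: sym\<close>)
  also have "\<dots> = (hs * hs) * (X$j$j + X$k$k * (cnj c * c) + (c * cnj (X$j$k) + X$j$k * cnj c))"
    using herm_entry[OF X, of k j] by (simp add: algebra_simps)
  also have "\<dots> = (1/2) * (X$j$j + X$k$k + (c * cnj (X$j$k) + X$j$k * cnj c))"
    by (simp add: hs_sq c)
  finally show ?thesis by (simp add: algebra_simps)
qed

lemma diag_le_norm: "norm (diag_vec X) \<le> norm (X :: complex^'n^'n)"
  unfolding norm_vec_def[of "diag_vec X"] norm_vec_def[of X]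
proof (rule L2_set_mono)
  fix i assume "i \<in> (UNIV :: 'n set)"
  have "norm (diag_vec X $ i) = \<bar>Re (X$i$i)\<bar>" by (simp add: diag_vec_def)
  also have "\<dots> \<le> cmod (X$i$i)" by (rule abs_Re_le_cmod)
  also have "\<dots> \<le> norm (X$i)" by (rule Finite_Cartesian_Product.norm_nth_le)
  finally show "norm (diag_vec X $ i) \<le> norm (X$i)" .
qed simp

lemma Re_diag_le: "\<bar>Re (X$i$i)\<bar> \<le> norm (diag_vec (X :: complex^'n^'n))"
  using component_le_norm_cart[of "diag_vec X" i] by (simp add: diag_vec_def)

lemma norm_le_sum_entries: "norm (X :: complex^'n^'n) \<le> (\<Sum>i\<in>UNIV. \<Sum>k\<in>UNIV. cmod (X$i$k))"
proof -
  have "norm X \<le> (\<Sum>i\<in>UNIV. norm (X$i))" by (simp add: norm_vec_def L2_set_le_sum)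
  also have "\<dots> \<le> (\<Sum>i\<in>UNIV. \<Sum>k\<in>UNIV. cmod (X$i$k))"
    by (intro sum_mono) (simp add: norm_vec_def L2_set_le_sum)
  finally show ?thesis .
qed

lemma entry_bound:
  assumes jk: "j \<noteq> k" and X: "X \<in> herm"
  shows "cmod (X$j$k) \<le> norm (diag_vec (mixU j k 1 ** X ** ctrans (mixU j k 1)))
     + norm (diag_vec (mixU j k \<i> ** X ** ctrans (mixU j k \<i>))) + 2 * norm (diag_vec X)"
proof -
  have d1: "Re (X$j$k) = Re ((mixU j k 1 ** X ** ctrans (mixU j k 1))$j$j) - Re (X$j$j)/2 - Re (X$k$k)/2"
    using mix_diag[OF jk _ X, of 1] by simp
  have d2: "Im (X$j$k) = Re ((mixU j k \<i> ** X ** ctrans (mixU j k \<i>))$j$j) - Re (X$j$j)/2 - Re (X$k$k)/2"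
    using mix_diag[OF jk _ X, of \<i>] by simp
  have "cmod (X$j$k) \<le> \<bar>Re (X$j$k)\<bar> + \<bar>Im (X$j$k)\<bar>" by (rule cmod_le)
  also have "\<dots> \<le> norm (diag_vec (mixU j k 1 ** X ** ctrans (mixU j k 1)))
     + norm (diag_vec (mixU j k \<i> ** X ** ctrans (mixU j k \<i>))) + 2 * norm (diag_vec X)"
    unfolding d1 d2
    using Re_diag_le[of "mixU j k 1 ** X ** ctrans (mixU j k 1)" j]
      Re_diag_le[of "mixU j k \<i> ** X ** ctrans (mixU j k \<i>)" j]
      Re_diag_le[of X j] Re_diag_le[of X k] by linarith
  finally show ?thesis .
qed

lemma diag_entry_bound:
  assumes X: "X \<in> herm"
  shows "cmod (X$j$j) \<le> norm (diag_vec X)"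
proof -
  have "Im (X$j$j) = 0" using herm_entry[OF X, of j j] by (metis cnj.simps(2) neg_equal_zero)
  then have "cmod (X$j$j) = \<bar>Re (X$j$j)\<bar>" by (simp add: cmod_def)
  then show ?thesis using Re_diag_le[of X j] by simp
qed





definition nd :: "complex^'n^'n \<Rightarrow> complex^'n^'n \<Rightarrow> real" where
  "nd U X = norm (diag_vec (U ** X ** ctrans U))"

definition Ufam :: "(complex^'n^'n) set" where
  "Ufam = insert (mat 1) ((\<lambda>(j,k,c). mixU j k c) ` {(j,k,c). j \<noteq> k \<and> (c = 1 \<or> c = \<i>)})"

lemma finite_Ufam: "finite (Ufam :: (complex^'n^'n) set)"
proof -
  have "{(j::'n,k::'n,c::complex). j \<noteq> k \<and> (c = 1 \<or> c = \<i>)} \<subseteq> UNIV \<times> UNIV \<times> {1, \<i>}" by auto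
  then have "finite {(j::'n,k::'n,c::complex). j \<noteq> k \<and> (c = 1 \<or> c = \<i>)}"
    by (rule finite_subset) simp
  then show ?thesis unfolding Ufam_def by simp
qed

lemma unitary_mat1: "unitary (mat 1 :: complex^'n^'n)"
  using herm_mat1 unfolding herm_def unitary_def by simp

lemma unitary_Ufam: "U \<in> Ufam \<Longrightarrow> unitary U"
  unfolding Ufam_def using unitary_mat1 by (auto intro!: mixU_unitary)

lemma nd_mat1: "nd (mat 1) X = norm (diag_vec X)"
proof -
  have c: "ctrans (mat 1 :: complex^'n^'n) = mat 1" using herm_mat1 unfolding herm_def by simp
  show ?thesis unfolding nd_def c by simp
qed

lemma frob_bound:
  fixes X :: "complex^'n^'n"
  assumes X: "X \<in> herm"
  shows "norm X \<le> (4 * real CARD('n) * real CARD('n)) * (\<Sum>U\<in>Ufam. nd U X)"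
proof -
  let ?S = "\<Sum>U\<in>Ufam. nd U (X :: complex^'n^'n)"
  have le: "nd U X \<le> ?S" if "U \<in> Ufam" for U
    using that finite_Ufam by (intro member_le_sum) (auto simp: nd_def)
  have m1: "mat 1 \<in> Ufam" by (simp add: Ufam_def)
  have ent: "cmod (X$j$k) \<le> 4 * ?S" for j k
  proof (cases "j = k")
    case True
    then have "cmod (X$j$k) \<le> nd (mat 1) X" using diag_entry_bound[OF X] by (simp add: nd_mat1)
    moreover have "0 \<le> ?S" by (simp add: nd_def sum_nonneg)
    ultimately show ?thesis using le[OF m1] by linarith
  next
    case False
    have u1: "mixU j k 1 \<in> Ufam" and u2: "mixU j k \<i> \<in> Ufam"
      unfolding Ufam_def using False by (auto intro!: image_eqI[where x="(j,k,_)"])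
    have e: "cmod (X$j$k) \<le> nd (mixU j k 1) X + nd (mixU j k \<i>) X + 2 * nd (mat 1) X"
      unfolding nd_mat1 unfolding nd_def by (rule entry_bound[OF False X])
    show ?thesis using e le[OF u1] le[OF u2] le[OF m1] by linarith
  qed
  have "norm X \<le> (\<Sum>i\<in>UNIV. \<Sum>k\<in>UNIV. cmod (X$i$k))" by (rule norm_le_sum_entries)
  also have "\<dots> \<le> (\<Sum>i\<in>(UNIV::'n set). \<Sum>k\<in>(UNIV::'n set). 4 * ?S)" by (intro sum_mono ent)
  also have "\<dots> = (4 * real CARD('n) * real CARD('n)) * ?S" by simp
  finally show ?thesis .
qed

lemma powr_sum_le:
  assumes "finite A" "\<And>a. a \<in> A \<Longrightarrow> 0 \<le> f a" "0 \<le> (m::real)"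
  shows "(\<Sum>a\<in>A. f a) powr m \<le> real (card A) powr m * (\<Sum>a\<in>A. f a powr m)"
proof (cases "A = {}")
  case True then show ?thesis by simp
next
  case False
  obtain a0 where a0: "a0 \<in> A" "\<And>a. a \<in> A \<Longrightarrow> f a \<le> f a0"
  proof -
    have "Max (f ` A) \<in> f ` A" using assms(1) False by (intro Max_in) auto
    then obtain a0 where "a0 \<in> A" "f a0 = Max (f ` A)" by auto
    moreover have "\<And>a. a \<in> A \<Longrightarrow> f a \<le> Max (f ` A)" using assms(1) by (intro Max_ge) auto
    ultimately show ?thesis using that by auto
  qed
  have "(\<Sum>a\<in>A. f a) \<le> real (card A) * f a0"
    using sum_bounded_above[of A f "f a0"] a0 by simp
  then have "(\<Sum>a\<in>A. f a) powr m \<le> (real (card A) * f a0) powr m"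
    using assms by (intro powr_mono2) (auto intro: sum_nonneg)
  also have "\<dots> = real (card A) powr m * f a0 powr m"
    using assms a0 by (simp add: powr_mult)
  also have "\<dots> \<le> real (card A) powr m * (\<Sum>a\<in>A. f a powr m)"
    using assms a0 by (intro mult_left_mono member_le_sum) auto
  finally show ?thesis .
qed


lemma conj_cont: "continuous_on UNIV (\<lambda>Y::complex^'n^'n. U ** Y ** ctrans U)"
  unfolding matrix_matrix_mult_def by (intro continuous_intros)

lemma conj_meas[measurable]: "(\<lambda>Y::complex^'n^'n. U ** Y ** ctrans U) \<in> borel_measurable borel"
  by (rule borel_measurable_continuous_onI[OF conj_cont])

lemma diag_meas[measurable]: "(diag_vec :: complex^'n^'n \<Rightarrow> real^'n) \<in> borel_measurable borel"
proof -
  have "diag_vec = (\<lambda>A::complex^'n^'n. \<chi> i. Re (A$i$i))" by (rule ext) (simp add: diag_vec_def)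
  moreover have "continuous_on UNIV (\<lambda>A::complex^'n^'n. \<chi> i. Re (A$i$i))" by (intro continuous_intros)
  ultimately show ?thesis by (metis borel_measurable_continuous_onI)
qed

lemma inv_integral:
  fixes X :: "'a \<Rightarrow> complex^'n^'n" and f :: "complex^'n^'n \<Rightarrow> ennreal"
  assumes inv: "invariant_rm M X" and Xm: "X \<in> borel_measurable M" and U: "unitary U"
    and f: "f \<in> borel_measurable borel"
  shows "(\<integral>\<^sup>+\<omega>. f (U ** X \<omega> ** ctrans U) \<partial>M) = (\<integral>\<^sup>+\<omega>. f (X \<omega>) \<partial>M)"
proof -
  have T: "(\<lambda>\<omega>. U ** X \<omega> ** ctrans U) \<in> borel_measurable M" using Xm by measurable
  have "(\<integral>\<^sup>+\<omega>. f (U ** X \<omega> ** ctrans U) \<partial>M) = integral\<^sup>N (distr M borel (\<lambda>\<omega>. U ** X \<omega> ** ctrans U)) f"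
    using T f by (simp add: nn_integral_distr)
  also have "\<dots> = integral\<^sup>N (distr M borel X) f" using inv U unfolding invariant_rm_def by simp
  also have "\<dots> = (\<integral>\<^sup>+\<omega>. f (X \<omega>) \<partial>M)" using Xm f by (simp add: nn_integral_distr)
  finally show ?thesis .
qed

lemma moment_bound:
  fixes X :: "'a \<Rightarrow> complex^'n^'n"
  assumes inv: "invariant_rm M X" and Xm: "X \<in> borel_measurable M"
    and herm: "\<forall>\<omega>\<in>space M. X \<omega> \<in> herm" and m: "0 \<le> m"
    and fin: "(\<integral>\<^sup>+\<omega>. ennreal (norm (diag_vec (X \<omega>)) powr m) \<partial>M) < \<infinity>"
  shows "(\<integral>\<^sup>+\<omega>. ennreal (norm (X \<omega>) powr m) \<partial>M) < \<infinity>"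
proof -
  have [measurable]: "X \<in> borel_measurable M" by (rule Xm)
  define C where "C = (4 * real CARD('n) * real CARD('n)) powr m * real (card (Ufam::(complex^'n^'n) set)) powr m"
  have C0: "0 \<le> C" by (simp add: C_def)
  have pt: "norm (X \<omega>) powr m \<le> C * (\<Sum>U\<in>Ufam. nd U (X \<omega>) powr m)" if "\<omega> \<in> space M" for \<omega>
  proof -
    let ?S = "\<Sum>U\<in>Ufam. nd U (X \<omega>)"
    have S0: "0 \<le> ?S" by (simp add: nd_def sum_nonneg)
    have "norm (X \<omega>) powr m \<le> ((4 * real CARD('n) * real CARD('n)) * ?S) powr m"
      using frob_bound[of "X \<omega>"] herm that m by (intro powr_mono2) auto
    also have "\<dots> = (4 * real CARD('n) * real CARD('n)) powr m * ?S powr m" using S0 by (simp add: powr_mult)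
    also have "\<dots> \<le> (4 * real CARD('n) * real CARD('n)) powr m * (real (card (Ufam::(complex^'n^'n) set)) powr m * (\<Sum>U\<in>Ufam. nd U (X \<omega>) powr m))"
      using powr_sum_le[OF finite_Ufam, of "\<lambda>U. nd U (X \<omega>)" m] m by (intro mult_left_mono) (auto simp: nd_def)
    finally show ?thesis by (simp add: C_def mult.assoc)
  qed
  have "(\<integral>\<^sup>+\<omega>. ennreal (norm (X \<omega>) powr m) \<partial>M) \<le> (\<integral>\<^sup>+\<omega>. ennreal C * (\<Sum>U\<in>Ufam. ennreal (nd U (X \<omega>) powr m)) \<partial>M)"
  proof (rule nn_integral_mono)
    fix \<omega> assume w: "\<omega> \<in> space M"
    have "ennreal C * (\<Sum>U\<in>Ufam. ennreal (nd U (X \<omega>) powr m)) = ennreal (C * (\<Sum>U\<in>Ufam. nd U (X \<omega>) powr m))"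
      using C0 by (simp add: ennreal_mult'[OF C0])
    then show "ennreal (norm (X \<omega>) powr m) \<le> ennreal C * (\<Sum>U\<in>Ufam. ennreal (nd U (X \<omega>) powr m))"
      using pt[OF w] by (simp add: ennreal_leI)
  qed
  also have "\<dots> = ennreal C * (\<Sum>U\<in>Ufam. \<integral>\<^sup>+\<omega>. ennreal (nd U (X \<omega>) powr m) \<partial>M)"
    unfolding nd_def by (subst nn_integral_cmult) (measurable, subst nn_integral_sum, measurable)
  also have "\<dots> = ennreal C * (\<Sum>U\<in>(Ufam::(complex^'n^'n) set). \<integral>\<^sup>+\<omega>. ennreal (norm (diag_vec (X \<omega>)) powr m) \<partial>M)"
    using inv_integral[OF inv Xm unitary_Ufam, where f = "\<lambda>Y. ennreal (norm (diag_vec Y) powr m)"]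
    by (simp add: nd_def)
  also have "\<dots> < \<infinity>" using fin finite_Ufam by (simp add: ennreal_mult_less_top of_nat_less_top)
  finally show ?thesis .
qed


theorem corollary5p7:
  fixes M :: "'a measure"
    and X :: "'a \<Rightarrow> complex^'n^'n"
    and x_eig :: "'a \<Rightarrow> real^'n"
    and \<alpha> :: real
  assumes "prob_space M"
    and "X \<in> borel_measurable M"
    and "\<forall>\<omega>\<in>space M. X \<omega> \<in> herm"
    and "invariant_rm M X"
    and "x_eig \<in> borel_measurable M"
    and "\<forall>\<omega>\<in>space M. is_eig_vec (X \<omega>) (x_eig \<omega>)"
    and "0 \<le> \<alpha>"
  shows "(heavy_tailed_mat M X \<alpha> \<longleftrightarrow> heavy_tailed_vec M (\<lambda>\<omega>. diag_vec (X \<omega>)) \<alpha>)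
       \<and> (heavy_tailed_vec M (\<lambda>\<omega>. diag_vec (X \<omega>)) \<alpha> \<longleftrightarrow> heavy_tailed_vec M x_eig \<alpha>)"
proof -
  have herm: "\<forall>\<omega>\<in>space M. X \<omega> \<in> herm" by (rule assms(3))
  have sm: "mat_sup (X \<omega>) = norm (X \<omega>)" if "\<omega> \<in> space M" for \<omega>
    using herm that mat_sup_eq by blast
  have se: "vec_sup (x_eig \<omega>) = norm (X \<omega>)" if "\<omega> \<in> space M" for \<omega>
    using assms(6) that norm_eig vec_sup_eq by metis
  have sd: "vec_sup (diag_vec (X \<omega>)) = norm (diag_vec (X \<omega>))" for \<omega> by (rule vec_sup_eq)
  have eqd: "(\<integral>\<^sup>+\<omega>. ennreal (vec_sup (diag_vec (X \<omega>)) powr m) \<partial>M) < \<infinity> \<longleftrightarrow>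
             (\<integral>\<^sup>+\<omega>. ennreal (norm (X \<omega>) powr m) \<partial>M) < \<infinity>" if m: "0 \<le> m" for m
  proof
    assume "(\<integral>\<^sup>+\<omega>. ennreal (vec_sup (diag_vec (X \<omega>)) powr m) \<partial>M) < \<infinity>"
    then have "(\<integral>\<^sup>+\<omega>. ennreal (norm (diag_vec (X \<omega>)) powr m) \<partial>M) < \<infinity>" by (simp add: sd)
    then show "(\<integral>\<^sup>+\<omega>. ennreal (norm (X \<omega>) powr m) \<partial>M) < \<infinity>"
      by (rule moment_bound[OF assms(4) assms(2) herm m])
  next
    assume fin: "(\<integral>\<^sup>+\<omega>. ennreal (norm (X \<omega>) powr m) \<partial>M) < \<infinity>"
    have "(\<integral>\<^sup>+\<omega>. ennreal (vec_sup (diag_vec (X \<omega>)) powr m) \<partial>M) \<le> (\<integral>\<^sup>+\<omega>. ennreal (norm (X \<omega>) powr m) \<partial>M)"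
      unfolding sd using m by (intro nn_integral_mono ennreal_leI powr_mono2 diag_le_norm) auto
    then show "(\<integral>\<^sup>+\<omega>. ennreal (vec_sup (diag_vec (X \<omega>)) powr m) \<partial>M) < \<infinity>"
      using fin by (rule le_less_trans)
  qed
  have eqm: "(\<integral>\<^sup>+\<omega>. ennreal (mat_sup (X \<omega>) powr m) \<partial>M) = (\<integral>\<^sup>+\<omega>. ennreal (norm (X \<omega>) powr m) \<partial>M)" for m
    by (rule nn_integral_cong) (simp add: sm)
  have eqe: "(\<integral>\<^sup>+\<omega>. ennreal (vec_sup (x_eig \<omega>) powr m) \<partial>M) = (\<integral>\<^sup>+\<omega>. ennreal (norm (X \<omega>) powr m) \<partial>M)" for m
    by (rule nn_integral_cong) (simp add: se)
  have setd: "{m. 0 \<le> m \<and> (\<integral>\<^sup>+\<omega>. ennreal (vec_sup (diag_vec (X \<omega>)) powr m) \<partial>M) < \<infinity>}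
      = {m. 0 \<le> m \<and> (\<integral>\<^sup>+\<omega>. ennreal (norm (X \<omega>) powr m) \<partial>M) < \<infinity>}" using eqd by auto
  have setm: "{m. 0 \<le> m \<and> (\<integral>\<^sup>+\<omega>. ennreal (mat_sup (X \<omega>) powr m) \<partial>M) < \<infinity>}
      = {m. 0 \<le> m \<and> (\<integral>\<^sup>+\<omega>. ennreal (norm (X \<omega>) powr m) \<partial>M) < \<infinity>}" by (simp only: eqm)
  have sete: "{m. 0 \<le> m \<and> (\<integral>\<^sup>+\<omega>. ennreal (vec_sup (x_eig \<omega>) powr m) \<partial>M) < \<infinity>}
      = {m. 0 \<le> m \<and> (\<integral>\<^sup>+\<omega>. ennreal (norm (X \<omega>) powr m) \<partial>M) < \<infinity>}" by (simp only: eqe)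
  show ?thesis unfolding heavy_tailed_mat_def heavy_tailed_vec_def tail_index_def setd setm sete by simp
qed

end
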